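(* Let $\Omega\subset\mathbb{R}^n$ be a non-empty, bounded, connected, open set with closure $\overline{\Omega}$. Let $J\in C(\overline{\Omega}\times\overline{\Omega})$, let $S\in C^\infty(\mathbb{R})$ have bounded $k$th derivative for every $k\in\{0,1,2,\dots\}$, let $\tau\in C(\overline{\Omega}\times\overline{\Omega})$ be non-negative and not identically zero, and let $\alpha>0$. Put $h:=\sup_{\overline{\Omega}\times\overline{\Omega}}\tau$, $Y:=C(\overline{\Omega})$ and $X:=C([-h,0];Y)$ (supremum norms), and define $G:X\to Y$ by $G(\phi)(\mathbf{r})=\int_{\overline{\Omega}}J(\mathbf{r},\mathbf{r}')S(\phi(-\tau(\mathbf{r},\mathbf{r}'),\mathbf{r}'))\,d\mathbf{r}'$. Then for every $\phi\in X$ the problem $$\dot V(t)=-\alpha V(t)+G(V_t)\ (t\ge0),\qquad V(t)=\phi(t)\ (t\in[-h,0])$$ has a unique global solution.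
   Context: For $\phi\in X$ write $\phi(t,\mathbf{r}):=\phi(t)(\mathbf{r})$. For a function $V:[-h,\infty)\to Y$ and $t\ge0$, the history $V_t\in X$ is $V_t(\theta):=V(t+\theta)$, $\theta\in[-h,0]$. A global solution is a function $V\in C([-h,\infty);Y)\cap C^1([0,\infty);Y)$ satisfying the differential equation for all $t\ge0$ and the initial condition on $[-h,0]$. *)

theory Defs
  imports "HOL-Analysis.Analysis"
begin

text \<open>Elements of Y = C(K) (K = closure of Omega) are represented by functions
  'a => real that are continuous on K; only their values on K matter.
  Y-valued functions of time are represented by V :: real => 'a => real.\<close>

definition supn :: "'a set \<Rightarrow> ('a \<Rightarrow> real) \<Rightarrow> real" where
  "supn K f = (SUP x\<in>K. \<bar>f x\<bar>)"

definition ycont_on :: "real set \<Rightarrow> 'a::metric_space set \<Rightarrow> (real \<Rightarrow> 'a \<Rightarrow> real) \<Rightarrow> bool" where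
  "ycont_on T K V \<longleftrightarrow>
     (\<forall>t\<in>T. continuous_on K (V t)) \<and>
     (\<forall>t\<in>T. \<forall>e>0. \<exists>d>0. \<forall>s\<in>T. \<bar>s - t\<bar> < d \<longrightarrow> supn K (\<lambda>x. V s x - V t x) < e)"

definition yhas_deriv :: "'a set \<Rightarrow> (real \<Rightarrow> 'a \<Rightarrow> real) \<Rightarrow> ('a \<Rightarrow> real) \<Rightarrow> real \<Rightarrow> real set \<Rightarrow> bool" where
  "yhas_deriv K V D t T \<longleftrightarrow>
     ((\<lambda>s. supn K (\<lambda>x. (V s x - V t x) / (s - t) - D x)) \<longlongrightarrow> 0) (at t within T)"

definition Gdelay :: "'a::euclidean_space set \<Rightarrow> ('a \<Rightarrow> 'a \<Rightarrow> real) \<Rightarrow> (real \<Rightarrow> real)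
    \<Rightarrow> ('a \<Rightarrow> 'a \<Rightarrow> real) \<Rightarrow> (real \<Rightarrow> 'a \<Rightarrow> real) \<Rightarrow> real \<Rightarrow> 'a \<Rightarrow> real" where
  "Gdelay K J S \<tau> V t r = integral K (\<lambda>r'. J r r' * S (V (t - \<tau> r r') r'))"

definition global_solution :: "'a::euclidean_space set \<Rightarrow> real \<Rightarrow> ('a \<Rightarrow> 'a \<Rightarrow> real) \<Rightarrow> (real \<Rightarrow> real)
    \<Rightarrow> ('a \<Rightarrow> 'a \<Rightarrow> real) \<Rightarrow> real \<Rightarrow> (real \<Rightarrow> 'a \<Rightarrow> real) \<Rightarrow> (real \<Rightarrow> 'a \<Rightarrow> real) \<Rightarrow> bool" where
  "global_solution K \<alpha> J S \<tau> h \<phi> V \<longleftrightarrow>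
     ycont_on {-h..} K V \<and>
     (\<exists>V'. ycont_on {0..} K V' \<and>
        (\<forall>t\<ge>0. yhas_deriv K V (V' t) t {0..}) \<and>
        (\<forall>t\<ge>0. \<forall>r\<in>K. V' t r = - \<alpha> * V t r + Gdelay K J S \<tau> V t r)) \<and>
     (\<forall>t\<in>{-h..0}. \<forall>r\<in>K. V t r = \<phi> t r)"

end

theory Submission
  imports Defs
begin

lemma int_cont_compact:
  fixes f :: "'a::euclidean_space \<Rightarrow> real"
  assumes K: "compact K" and f: "continuous_on K f"
  shows "f integrable_on K"
proof -
  obtain B where B: "\<forall>x\<in>K. norm (f x) \<le> B"
    using compact_continuous_image[OF f K] compact_imp_bounded bounded_iff by (metis image_eqI)
  have Kl: "K \<in> lmeasurable" using K by (rule lmeasurable_compact)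
  have "f absolutely_integrable_on K"
    by (rule measurable_bounded_by_integrable_imp_absolutely_integrable[where g="\<lambda>_. B"])
       (use B Kl f in \<open>auto intro: continuous_imp_measurable_on_sets_lebesgue integrable_on_const\<close>)
  then show ?thesis using absolutely_integrable_on_def by blast
qed

lemma int_bound_compact:
  fixes f :: "'a::euclidean_space \<Rightarrow> real"
  assumes K: "compact K" and f: "continuous_on K f" and B: "\<And>x. x \<in> K \<Longrightarrow> \<bar>f x\<bar> \<le> B"
  shows "\<bar>integral K f\<bar> \<le> B * measure lebesgue K"
proof -
  have Kl: "K \<in> lmeasurable" using K by (rule lmeasurable_compact)
  have "norm (integral K f) \<le> integral K (\<lambda>_. B)"
    by (rule integral_norm_bound_integral) (use B Kl int_cont_compact[OF K f] in \<open>auto intro: integrable_on_const\<close>)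
  also have "integral K (\<lambda>_. B) = B * measure lebesgue K"
  proof -
    have "integral K (\<lambda>_. B) = integral K (\<lambda>x. B * 1)" by simp
    also have "\<dots> = B * integral K (\<lambda>x. 1)" by (rule integral_mult_right)
    finally show ?thesis using lmeasure_integral[OF Kl] by simp
  qed
  finally show ?thesis by simp
qed

lemma cont_slice:
  assumes "continuous_on (U \<times> C) g" "u \<in> U"
  shows "continuous_on C (\<lambda>x. g (u, x))"
  by (rule continuous_on_compose2[OF assms(1)]) (use assms(2) in \<open>auto intro!: continuous_intros\<close>)

lemma param_int_cont:
  fixes g :: "'u::metric_space \<times> 'a::euclidean_space \<Rightarrow> real"
  assumes C: "compact C" and g: "continuous_on (U \<times> C) g"
  shows "continuous_on U (\<lambda>u. integral C (\<lambda>x. g (u, x)))"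
  unfolding continuous_on_iff
proof (intro ballI allI impI)
  fix u0 and e :: real assume u0: "u0 \<in> U" and e: "e > 0"
  define m where "m = measure lebesgue C"
  have m0: "m \<ge> 0" unfolding m_def by simp
  define e' where "e' = e / (m + 1)"
  have e': "e' > 0" using e m0 unfolding e'_def by simp
  obtain X0 where X0: "u0 \<in> X0" "open X0" "\<forall>x\<in>X0 \<inter> U. \<forall>t \<in> C. dist (g (x, t)) (g (u0, t)) \<le> e'"
    using continuous_on_prod_compactE[OF g C u0 e'] by blast
  obtain d where d: "d > 0" "ball u0 d \<subseteq> X0" using X0 open_contains_ball by blast
  show "\<exists>d>0. \<forall>x'\<in>U. dist x' u0 < d \<longrightarrow> dist (integral C (\<lambda>x. g (x', x))) (integral C (\<lambda>x. g (u0, x))) < e"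
  proof (intro exI conjI ballI impI)
    fix u assume u: "u \<in> U" "dist u u0 < d"
    then have uX: "u \<in> X0" using d by (auto simp: dist_commute)
    have c1: "continuous_on C (\<lambda>x. g (u, x))" by (rule cont_slice[OF g u(1)])
    have c0: "continuous_on C (\<lambda>x. g (u0, x))" by (rule cont_slice[OF g u0])
    have "\<bar>integral C (\<lambda>x. g (u, x) - g (u0, x))\<bar> \<le> e' * m"
      unfolding m_def
      by (rule int_bound_compact[OF C]) (use c1 c0 X0 uX u in \<open>auto intro!: continuous_intros simp: dist_real_def\<close>)
    also have "\<dots> < e" unfolding e'_def using e m0 by (simp add: field_simps)
    finally show "dist (integral C (\<lambda>x. g (u, x))) (integral C (\<lambda>x. g (u0, x))) < e"
      using integral_diff[OF int_cont_compact[OF C c1] int_cont_compact[OF C c0]]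
      by (simp add: dist_real_def)
  qed (use d in auto)
qed

lemma supn_le:
  assumes "K \<noteq> {}" "\<And>x. x \<in> K \<Longrightarrow> \<bar>f x\<bar> \<le> B"
  shows "supn K f \<le> B"
  unfolding supn_def using assms by (intro cSUP_least) auto

lemma supn_abs_le:
  assumes "K \<noteq> {}" "\<And>x. x \<in> K \<Longrightarrow> \<bar>f x\<bar> \<le> B"
  shows "\<bar>supn K f\<bar> \<le> B"
proof -
  obtain x where x: "x \<in> K" using assms(1) by blast
  have "\<bar>f x\<bar> \<le> supn K f" unfolding supn_def
    by (rule cSUP_upper[OF x]) (use assms in \<open>auto intro!: bdd_aboveI2\<close>)
  then show ?thesis using supn_le[OF assms] by simp
qed

lemma supn_ge:
  assumes "compact K" "continuous_on K f" "x \<in> K"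
  shows "\<bar>f x\<bar> \<le> supn K f"
proof -
  have "compact ((\<lambda>x. \<bar>f x\<bar>) ` K)"
    by (rule compact_continuous_image) (use assms in \<open>auto intro!: continuous_intros\<close>)
  then have "bdd_above ((\<lambda>x. \<bar>f x\<bar>) ` K)" by (rule bounded_imp_bdd_above[OF compact_imp_bounded])
  then show ?thesis unfolding supn_def by (rule cSUP_upper[OF assms(3)])
qed

lemma ycont_from_joint:
  assumes K: "compact K" "K \<noteq> {}" and V: "continuous_on (T \<times> K) (\<lambda>(t,x). V t x)"
  shows "ycont_on T K V"
  unfolding ycont_on_def
proof (intro conjI ballI allI impI)
  fix t assume t: "t \<in> T"
  show "continuous_on K (V t)" using cont_slice[OF V t] by simp
next
  fix t and e :: real assume t: "t \<in> T" and e: "e > 0"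
  obtain X0 where X0: "t \<in> X0" "open X0"
      "\<forall>s\<in>X0 \<inter> T. \<forall>x\<in>K. dist ((\<lambda>(t,x). V t x) (s,x)) ((\<lambda>(t,x). V t x) (t,x)) \<le> e/2"
    using continuous_on_prod_compactE[OF V K(1) t, of "e/2"] e by auto
  obtain d where d: "d > 0" "ball t d \<subseteq> X0" using X0 open_contains_ball by blast
  show "\<exists>d>0. \<forall>s\<in>T. \<bar>s - t\<bar> < d \<longrightarrow> supn K (\<lambda>x. V s x - V t x) < e"
  proof (intro exI conjI ballI impI)
    fix s assume s: "s \<in> T" "\<bar>s - t\<bar> < d"
    then have "s \<in> X0" using d by (auto simp: dist_real_def)
    then have "supn K (\<lambda>x. V s x - V t x) \<le> e/2"
      using X0(3) s K(2) by (intro supn_le) (auto simp: dist_real_def)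
    then show "supn K (\<lambda>x. V s x - V t x) < e" using e by simp
  qed (use d in auto)
qed

lemma joint_from_ycont:
  assumes K: "compact K" and V: "ycont_on T K V"
  shows "continuous_on (T \<times> K) (\<lambda>(t,x). V t x)"
  unfolding continuous_on_iff
proof (intro ballI allI impI)
  fix p and e :: real assume p: "p \<in> T \<times> K" and e: "e > 0"
  obtain t x where tx: "p = (t, x)" "t \<in> T" "x \<in> K" using p by auto
  have ct: "continuous_on K (V t)" using V tx unfolding ycont_on_def by auto
  obtain d1 where d1: "d1 > 0" "\<forall>s\<in>T. \<bar>s - t\<bar> < d1 \<longrightarrow> supn K (\<lambda>x. V s x - V t x) < e/2"
    using V tx e unfolding ycont_on_def by (meson half_gt_zero)
  obtain d2 where d2: "d2 > 0" "\<forall>y\<in>K. dist y x < d2 \<longrightarrow> dist (V t y) (V t x) < e/2"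
    using ct tx e unfolding continuous_on_iff by (meson half_gt_zero)
  show "\<exists>d>0. \<forall>p'\<in>T \<times> K. dist p' p < d \<longrightarrow> dist ((\<lambda>(t,x). V t x) p') ((\<lambda>(t,x). V t x) p) < e"
  proof (intro exI conjI ballI impI)
    fix p' assume p': "p' \<in> T \<times> K" "dist p' p < min d1 d2"
    obtain s y where sy: "p' = (s, y)" "s \<in> T" "y \<in> K" using p' by auto
    have "dist s t < d1" using p'(2) dist_fst_le[of p' p] sy tx by auto
    then have a: "supn K (\<lambda>x. V s x - V t x) < e/2" using d1 sy by (simp add: dist_real_def)
    have cs: "continuous_on K (V s)" using V sy unfolding ycont_on_def by auto
    have "\<bar>V s y - V t y\<bar> \<le> supn K (\<lambda>x. V s x - V t x)"
      by (rule supn_ge[OF K _ sy(3)]) (use cs ct in \<open>auto intro!: continuous_intros\<close>)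
    moreover have "dist y x < d2" using p'(2) dist_snd_le[of p' p] sy tx by auto
    then have "\<bar>V t y - V t x\<bar> < e/2" using d2 sy by (simp add: dist_real_def)
    ultimately show "dist ((\<lambda>(t,x). V t x) p') ((\<lambda>(t,x). V t x) p) < e"
      using a sy tx by (simp add: dist_real_def) (smt (verit))
  qed (use d1 d2 in auto)
qed

lemma cont_local:
  fixes f :: "real \<times> 'a::metric_space \<Rightarrow> 'b::metric_space"
  assumes "\<And>T. continuous_on ({a..T} \<times> K) f"
  shows "continuous_on ({a..} \<times> K) f"
  unfolding continuous_on_iff
proof (intro ballI allI impI)
  fix p and e :: real assume p: "p \<in> {a..} \<times> K" and e: "e > 0"
  obtain t x where tx: "p = (t, x)" "t \<ge> a" "x \<in> K" using p by auto
  obtain d where d: "d > 0" "\<forall>p'\<in>{a..t+1} \<times> K. dist p' p < d \<longrightarrow> dist (f p') (f p) < e"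
    using assms[of "t+1"] e tx unfolding continuous_on_iff by (metis atLeastAtMost_iff mem_Sigma_iff less_add_one less_imp_le)
  show "\<exists>d>0. \<forall>p'\<in>{a..} \<times> K. dist p' p < d \<longrightarrow> dist (f p') (f p) < e"
  proof (intro exI conjI ballI impI)
    fix p' assume p': "p' \<in> {a..} \<times> K" "dist p' p < min d 1"
    have "dist (fst p') t < 1" using p'(2) dist_fst_le[of p' p] tx by auto
    then have "fst p' \<le> t + 1" by (simp add: dist_real_def)
    then have "p' \<in> {a..t+1} \<times> K" using p' by (auto simp: mem_Times_iff)
    then show "dist (f p') (f p) < e" using d p' by auto
  qed (use d in auto)
qed



locale dde =
  fixes K :: "'a::euclidean_space set" and J \<tau> :: "'a \<Rightarrow> 'a \<Rightarrow> real" and S :: "real \<Rightarrow> real"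
    and \<alpha> h MJ MS LS :: real and \<phi> :: "real \<Rightarrow> 'a \<Rightarrow> real"
  assumes K: "compact K" "K \<noteq> {}"
    and Jc: "continuous_on (K \<times> K) (\<lambda>(r,r'). J r r')"
    and Jb: "\<And>r r'. r \<in> K \<Longrightarrow> r' \<in> K \<Longrightarrow> \<bar>J r r'\<bar> \<le> MJ"
    and Sc: "continuous_on UNIV S"
    and Sb: "\<And>x. \<bar>S x\<bar> \<le> MS"
    and Sl: "\<And>x y. \<bar>S x - S y\<bar> \<le> LS * \<bar>x - y\<bar>"
    and tc: "continuous_on (K \<times> K) (\<lambda>(r,r'). \<tau> r r')"
    and tb: "\<And>r r'. r \<in> K \<Longrightarrow> r' \<in> K \<Longrightarrow> 0 \<le> \<tau> r r' \<and> \<tau> r r' \<le> h"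
    and alpha: "\<alpha> > 0" and LS0: "LS \<ge> 0" and h0: "h \<ge> 0"
    and phic: "continuous_on ({-h..0} \<times> K) (\<lambda>(t,r). \<phi> t r)"
begin

definition "G V t r = Gdelay K J S \<tau> V t r"
definition "\<mu> = measure lebesgue K"
definition "L = MJ * LS * \<mu>"
definition "c = \<alpha> + L"
definition "F V s r = - \<alpha> * V s r + G V s r"
definition "P V t r = \<phi> (min t 0) r + integral {0..max t 0} (\<lambda>s. F V s r)"

lemma MJ0: "MJ \<ge> 0" using Jb[of "SOME x. x \<in> K" "SOME x. x \<in> K"] K(2) some_in_eq by force
lemma MS0: "MS \<ge> 0" using Sb[of 0] by linarith
lemma mu0: "\<mu> \<ge> 0" unfolding \<mu>_def by simp
lemma L0: "L \<ge> 0" unfolding L_def using MJ0 LS0 mu0 by simp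
lemma c0: "c \<ge> 0" unfolding c_def using L0 alpha by simp

lemma Jcomp:
  assumes "continuous_on A a" "continuous_on A b" "\<And>x. x \<in> A \<Longrightarrow> a x \<in> K" "\<And>x. x \<in> A \<Longrightarrow> b x \<in> K"
  shows "continuous_on A (\<lambda>x. J (a x) (b x))"
proof -
  have "continuous_on A (\<lambda>x. (\<lambda>(r,r'). J r r') (a x, b x))"
    by (rule continuous_on_compose2[OF Jc]) (use assms in \<open>auto intro!: continuous_intros\<close>)
  then show ?thesis by simp
qed

lemma tcomp:
  assumes "continuous_on A a" "continuous_on A b" "\<And>x. x \<in> A \<Longrightarrow> a x \<in> K" "\<And>x. x \<in> A \<Longrightarrow> b x \<in> K"
  shows "continuous_on A (\<lambda>x. \<tau> (a x) (b x))"
proof -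
  have "continuous_on A (\<lambda>x. (\<lambda>(r,r'). \<tau> r r') (a x, b x))"
    by (rule continuous_on_compose2[OF tc]) (use assms in \<open>auto intro!: continuous_intros\<close>)
  then show ?thesis by simp
qed

lemma Vcomp:
  assumes V: "continuous_on (B \<times> K) (\<lambda>(t,r). V t r)"
    and "continuous_on A a" "continuous_on A b" "\<And>x. x \<in> A \<Longrightarrow> a x \<in> B" "\<And>x. x \<in> A \<Longrightarrow> b x \<in> K"
  shows "continuous_on A (\<lambda>x. V (a x) (b x))"
proof -
  have "continuous_on A (\<lambda>x. (\<lambda>(t,r). V t r) (a x, b x))"
    by (rule continuous_on_compose2[OF V]) (use assms in \<open>auto intro!: continuous_intros\<close>)
  then show ?thesis by simp
qed

lemma Scomp: "continuous_on A a \<Longrightarrow> continuous_on A (\<lambda>x. S (a x))"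
  by (rule continuous_on_compose2[OF Sc]) auto

lemma Gcont:
  assumes AB: "\<And>t r r'. t \<in> A \<Longrightarrow> r \<in> K \<Longrightarrow> r' \<in> K \<Longrightarrow> t - \<tau> r r' \<in> B"
    and V: "continuous_on (B \<times> K) (\<lambda>(t,r). V t r)"
  shows "continuous_on (A \<times> K) (\<lambda>(t,r). G V t r)"
proof -
  define g where "g = (\<lambda>q::((real \<times> 'a) \<times> 'a). J (snd (fst q)) (snd q) * S (V (fst (fst q) - \<tau> (snd (fst q)) (snd q)) (snd q)))"
  have ct: "continuous_on ((A \<times> K) \<times> K) (\<lambda>q. \<tau> (snd (fst q)) (snd q))"
    by (rule tcomp) (auto intro!: continuous_intros)
  have "continuous_on ((A \<times> K) \<times> K) g"
    unfolding g_def
    by (intro continuous_on_mult Jcomp Scomp Vcomp[OF V] continuous_intros ct) (auto intro: AB)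
  from param_int_cont[OF K(1) this]
  have "continuous_on (A \<times> K) (\<lambda>u. integral K (\<lambda>x. g (u, x)))" .
  moreover have "(\<lambda>u. integral K (\<lambda>x. g (u, x))) = (\<lambda>(t,r). G V t r)"
    by (auto simp: g_def G_def Gdelay_def fun_eq_iff)
  ultimately show ?thesis by metis
qed

lemma Gint_cont:
  assumes "\<And>r'. r' \<in> K \<Longrightarrow> t - \<tau> r r' \<in> B" "r \<in> K"
    and V: "continuous_on (B \<times> K) (\<lambda>(t,r). V t r)"
  shows "continuous_on K (\<lambda>r'. J r r' * S (V (t - \<tau> r r') r'))"
  using assms
  by (intro continuous_on_mult Jcomp Scomp Vcomp[OF V] continuous_intros tcomp) auto

lemma Gbound:
  assumes "\<And>r'. r' \<in> K \<Longrightarrow> t - \<tau> r r' \<in> B" "r \<in> K"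
    and V: "continuous_on (B \<times> K) (\<lambda>(t,r). V t r)"
  shows "\<bar>G V t r\<bar> \<le> MJ * MS * \<mu>"
  unfolding G_def Gdelay_def \<mu>_def
proof (rule int_bound_compact[OF K(1) Gint_cont[OF assms]])
  fix x assume x: "x \<in> K"
  have "\<bar>J r x * S (V (t - \<tau> r x) x)\<bar> = \<bar>J r x\<bar> * \<bar>S (V (t - \<tau> r x) x)\<bar>" by (simp add: abs_mult)
  also have "\<dots> \<le> MJ * MS" using Jb[OF assms(2) x] Sb MJ0 by (intro mult_mono) auto
  finally show "\<bar>J r x * S (V (t - \<tau> r x) x)\<bar> \<le> MJ * MS" .
qed

lemma Glip:
  assumes B: "\<And>r'. r' \<in> K \<Longrightarrow> t - \<tau> r r' \<in> B" "r \<in> K"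
    and V: "continuous_on (B \<times> K) (\<lambda>(t,r). V t r)"
    and W: "continuous_on (B \<times> K) (\<lambda>(t,r). W t r)"
    and e: "\<And>r'. r' \<in> K \<Longrightarrow> \<bar>V (t - \<tau> r r') r' - W (t - \<tau> r r') r'\<bar> \<le> e"
  shows "\<bar>G V t r - G W t r\<bar> \<le> L * e"
proof -
  have "G V t r - G W t r = integral K (\<lambda>r'. J r r' * S (V (t - \<tau> r r') r') - J r r' * S (W (t - \<tau> r r') r'))"
    unfolding G_def Gdelay_def
    by (rule integral_diff[symmetric]; rule int_cont_compact[OF K(1)]; rule Gint_cont[OF B]) (use V W in auto)
  also have "\<bar>\<dots>\<bar> \<le> (MJ * (LS * e)) * \<mu>"
    unfolding \<mu>_def
  proof (rule int_bound_compact[OF K(1)])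
    show "continuous_on K (\<lambda>r'. J r r' * S (V (t - \<tau> r r') r') - J r r' * S (W (t - \<tau> r r') r'))"
      by (intro continuous_intros Gint_cont[OF B V] Gint_cont[OF B W])
    fix x assume x: "x \<in> K"
    have "\<bar>J r x * S (V (t - \<tau> r x) x) - J r x * S (W (t - \<tau> r x) x)\<bar>
        = \<bar>J r x\<bar> * \<bar>S (V (t - \<tau> r x) x) - S (W (t - \<tau> r x) x)\<bar>"
      by (simp add: abs_mult right_diff_distrib[symmetric])
    also have "\<dots> \<le> MJ * (LS * e)"
    proof (rule mult_mono)
      show "\<bar>S (V (t - \<tau> r x) x) - S (W (t - \<tau> r x) x)\<bar> \<le> LS * e"
        using Sl[of "V (t - \<tau> r x) x" "W (t - \<tau> r x) x"] e[OF x] LS0 mult_left_mono order_trans by blast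
    qed (use Jb[OF B(2) x] MJ0 in auto)
    finally show "\<bar>J r x * S (V (t - \<tau> r x) x) - J r x * S (W (t - \<tau> r x) x)\<bar> \<le> MJ * (LS * e)" .
  qed
  also have "\<dots> = L * e" unfolding L_def by simp
  finally show ?thesis .
qed

end


lemma cont_bound:
  fixes f :: "'b::metric_space \<Rightarrow> real"
  assumes "compact A" "continuous_on A f"
  obtains M where "\<And>x. x \<in> A \<Longrightarrow> \<bar>f x\<bar> \<le> M"
proof -
  have "bounded (f ` A)" by (rule compact_imp_bounded[OF compact_continuous_image[OF assms(2,1)]])
  then obtain M where "\<forall>y\<in>f ` A. norm y \<le> M" unfolding bounded_iff by blast
  then show ?thesis using that by auto
qed

lemma int_diff_bound_aux:
  fixes f :: "real \<Rightarrow> real"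
  assumes f: "continuous_on {0..b} f" and st: "0 \<le> s" "s \<le> t" "t \<le> b"
    and M: "\<And>u. u \<in> {0..b} \<Longrightarrow> \<bar>f u\<bar> \<le> M"
  shows "\<bar>integral {0..t} f - integral {0..s} f\<bar> \<le> M * (t - s)"
proof -
  have "f integrable_on {0..t}"
    by (rule integrable_continuous_interval, rule continuous_on_subset[OF f]) (use st in auto)
  from Henstock_Kurzweil_Integration.integral_combine[OF st(1,2) this]
  have "integral {0..t} f - integral {0..s} f = integral {s..t} f" by simp
  also have "\<bar>\<dots>\<bar> \<le> M * (t - s)"
    using Henstock_Kurzweil_Integration.integral_bound[where a=s and b=t and f=f and B=M] continuous_on_subset[OF f, of "{s..t}"] M st by auto
  finally show ?thesis .
qed

lemma int_diff_bound:
  fixes f :: "real \<Rightarrow> real"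
  assumes f: "continuous_on {0..b} f" and st: "0 \<le> s" "s \<le> b" "0 \<le> t" "t \<le> b"
    and M: "\<And>u. u \<in> {0..b} \<Longrightarrow> \<bar>f u\<bar> \<le> M"
  shows "\<bar>integral {0..s} f - integral {0..t} f\<bar> \<le> M * \<bar>s - t\<bar>"
proof (cases "s \<le> t")
  case True
  then show ?thesis using int_diff_bound_aux[OF f st(1) True st(4) M] by (simp add: abs_minus_commute)
next
  case False
  then have "t \<le> s" by simp
  from int_diff_bound_aux[OF f st(3) this st(2) M] show ?thesis using False by simp
qed

lemma int_pow:
  assumes "0 \<le> (t::real)"
  shows "integral {0..t} (\<lambda>u. u^k) = t^Suc k / Suc k"
proof -
  have "((\<lambda>u. u^k) has_integral (t^Suc k / Suc k - 0^Suc k / Suc k)) {0..t}"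
  proof (rule fundamental_theorem_of_calculus[OF assms])
    fix x assume "x \<in> {0..t}"
    have "((\<lambda>u. u^Suc k / Suc k) has_real_derivative x^k) (at x within {0..t})"
      by (intro derivative_eq_intros) (auto simp: field_simps simp del: of_nat_Suc)
    then show "((\<lambda>u. u^Suc k / Suc k) has_vector_derivative x^k) (at x within {0..t})"
      by (simp add: has_real_derivative_iff_has_vector_derivative)
  qed
  then show ?thesis by (simp add: integral_unique)
qed

context dde begin

lemma Icont:
  fixes Phi :: "real \<Rightarrow> 'a \<Rightarrow> real"
  assumes Phi: "continuous_on ({0..} \<times> K) (\<lambda>(s,r). Phi s r)"
  shows "continuous_on ({0..} \<times> K) (\<lambda>(t,r). integral {0..t} (\<lambda>s. Phi s r))"
proof -
  have "ycont_on {0..} K (\<lambda>t r. integral {0..t} (\<lambda>s. Phi s r))"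
  unfolding ycont_on_def
  proof (intro conjI ballI allI impI)
  fix t :: real assume t: "t \<in> {0..}"
  have "continuous_on (K \<times> {0..t}) (\<lambda>q. Phi (snd q) (fst q))"
    by (rule Vcomp[OF Phi]) (auto intro!: continuous_intros)
  from param_int_cont[OF _ this] show "continuous_on K (\<lambda>r. integral {0..t} (\<lambda>s. Phi s r))"
    by simp
next
  fix t e :: real assume t: "t \<in> {0..}" and e: "e > 0"
  have cpt: "compact ({0..t+1} \<times> K)" using K(1) by (intro compact_Times) auto
  have cnt: "continuous_on ({0..t+1} \<times> K) (\<lambda>(s,r). Phi s r)"
    by (rule continuous_on_subset[OF Phi]) auto
  obtain M where M: "\<And>x. x \<in> {0..t+1} \<times> K \<Longrightarrow> \<bar>(\<lambda>(s,r). Phi s r) x\<bar> \<le> M"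
    using cont_bound[OF cpt cnt] by blast
  have M0: "M \<ge> 0" using M[of "(0, SOME x. x \<in> K)"] K(2) t some_in_eq by force
  define d where "d = min 1 (e / (M + 1))"
  have d: "d > 0" unfolding d_def using e M0 by simp
  show "\<exists>d>0. \<forall>s\<in>{0..}. \<bar>s - t\<bar> < d \<longrightarrow>
          supn K (\<lambda>x. integral {0..s} (\<lambda>s. Phi s x) - integral {0..t} (\<lambda>s. Phi s x)) < e"
  proof (intro exI conjI ballI impI)
    fix s assume s: "s \<in> {0..}" "\<bar>s - t\<bar> < d"
    have "supn K (\<lambda>x. integral {0..s} (\<lambda>s. Phi s x) - integral {0..t} (\<lambda>s. Phi s x)) \<le> M * \<bar>s - t\<bar>"
    proof (rule supn_le[OF K(2)])
      fix x assume x: "x \<in> K"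
      show "\<bar>integral {0..s} (\<lambda>s. Phi s x) - integral {0..t} (\<lambda>s. Phi s x)\<bar> \<le> M * \<bar>s - t\<bar>"
      proof (rule int_diff_bound[where b="t+1"])
        show "continuous_on {0..t + 1} (\<lambda>s. Phi s x)"
          by (rule Vcomp[OF Phi]) (use x in \<open>auto intro!: continuous_intros\<close>)
        have "d \<le> 1" unfolding d_def by simp
        then show "s \<le> t + 1" using s by auto
        show "0 \<le> s" "0 \<le> t" "t \<le> t + 1" using s t by auto
        fix u assume "u \<in> {0..t+1}"
        then show "\<bar>Phi u x\<bar> \<le> M" using M[of "(u,x)"] x by simp
      qed
    qed
    also have "\<dots> \<le> M * d" using s M0 by (intro mult_left_mono) auto
    also have "\<dots> < e"
    proof -
      have "M * d \<le> M * (e / (M + 1))" using M0 unfolding d_def by (intro mult_left_mono) auto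
      also have "\<dots> < e" using M0 e by (simp add: field_simps)
      finally show ?thesis .
    qed
    finally show "supn K (\<lambda>x. integral {0..s} (\<lambda>s. Phi s x) - integral {0..t} (\<lambda>s. Phi s x)) < e" .
  qed (use d in auto)
qed
  from joint_from_ycont[OF K(1) this] show ?thesis by simp
qed

lemma Fcont:
  assumes V: "continuous_on ({-h..} \<times> K) (\<lambda>(t,r). V t r)"
  shows "continuous_on ({0..} \<times> K) (\<lambda>(s,r). F V s r)"
proof -
  have G: "continuous_on ({0..} \<times> K) (\<lambda>(t,r). G V t r)"
  proof (rule Gcont[OF _ V])
    fix t r r' assume "t \<in> {0::real..}" "r \<in> K" "r' \<in> K"
    then show "t - \<tau> r r' \<in> {-h..}" using tb[of r r'] by auto
  qed
  have V0: "continuous_on ({0..} \<times> K) (\<lambda>(t,r). V t r)"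
    by (rule continuous_on_subset[OF V]) (use h0 in auto)
  have "continuous_on ({0..} \<times> K) (\<lambda>x. - \<alpha> * (\<lambda>(t,r). V t r) x + (\<lambda>(t,r). G V t r) x)"
    by (intro continuous_intros V0 G)
  then show ?thesis by (simp add: F_def case_prod_beta)
qed

lemma Fslice:
  assumes V: "continuous_on ({-h..} \<times> K) (\<lambda>(t,r). V t r)" and r: "r \<in> K"
  shows "continuous_on {0..t} (\<lambda>s. F V s r)"
  by (rule Vcomp[OF Fcont[OF V]]) (use r in \<open>auto intro!: continuous_intros\<close>)

lemma Pcont:
  assumes V: "continuous_on ({-h..} \<times> K) (\<lambda>(t,r). V t r)"
  shows "continuous_on ({-h..} \<times> K) (\<lambda>(t,r). P V t r)"
proof -
  have a: "continuous_on ({-h..} \<times> K) (\<lambda>x. \<phi> (min (fst x) 0) (snd x))"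
    by (rule Vcomp[OF phic]) (use h0 in \<open>auto intro!: continuous_intros\<close>)
  have b: "continuous_on ({-h..} \<times> K) (\<lambda>x. (\<lambda>(t,r). integral {0..t} (\<lambda>s. F V s r)) (max (fst x) 0, snd x))"
    by (rule continuous_on_compose2[OF Icont[OF Fcont[OF V]]]) (auto intro!: continuous_intros)
  have "continuous_on ({-h..} \<times> K) (\<lambda>x. \<phi> (min (fst x) 0) (snd x) + (\<lambda>(t,r). integral {0..t} (\<lambda>s. F V s r)) (max (fst x) 0, snd x))"
    by (rule continuous_on_add[OF a b])
  then show ?thesis by (simp add: P_def case_prod_beta)
qed

lemma P_init: "t \<le> 0 \<Longrightarrow> P V t r = \<phi> t r"
  by (simp add: P_def)

lemma P_pos: "t \<ge> 0 \<Longrightarrow> P V t r = \<phi> 0 r + integral {0..t} (\<lambda>s. F V s r)"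
  by (simp add: P_def)

lemma LipStep:
  assumes V: "continuous_on ({-h..} \<times> K) (\<lambda>(t,r). V t r)"
    and W: "continuous_on ({-h..} \<times> K) (\<lambda>(t,r). W t r)"
    and t: "0 \<le> t" and r: "r \<in> K" and f: "continuous_on {0..t} f"
    and mono: "\<And>u v. 0 \<le> u \<Longrightarrow> u \<le> v \<Longrightarrow> v \<le> t \<Longrightarrow> f u \<le> f v"
    and bd: "\<And>s r. s \<in> {-h..t} \<Longrightarrow> r \<in> K \<Longrightarrow> \<bar>V s r - W s r\<bar> \<le> f (max s 0)"
  shows "\<bar>P V t r - P W t r\<bar> \<le> c * integral {0..t} f"
proof -
  have iV: "(\<lambda>s. F V s r) integrable_on {0..t}" by (rule integrable_continuous_interval[OF Fslice[OF V r]])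
  have iW: "(\<lambda>s. F W s r) integrable_on {0..t}" by (rule integrable_continuous_interval[OF Fslice[OF W r]])
  have "P V t r - P W t r = integral {0..t} (\<lambda>s. F V s r - F W s r)"
    using P_pos[OF t] integral_diff[OF iV iW] by simp
  also have "norm (integral {0..t} (\<lambda>s. F V s r - F W s r)) \<le> integral {0..t} (\<lambda>s. c * f s)"
  proof (rule Henstock_Kurzweil_Integration.integral_norm_bound_integral)
    show "(\<lambda>s. F V s r - F W s r) integrable_on {0..t}" using iV iW by (rule integrable_diff)
    show "(\<lambda>s. c * f s) integrable_on {0..t}"
      by (rule integrable_continuous_interval) (intro continuous_intros f)
    fix s assume s: "s \<in> {0..t}"
    have fs: "\<bar>V s r - W s r\<bar> \<le> f s" using bd[of s r] s r h0 by auto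
    have "\<bar>G V s r - G W s r\<bar> \<le> L * f s"
    proof (rule Glip[where B="{-h..}", OF _ r V W])
      fix r' assume r': "r' \<in> K"
      show "s - \<tau> r r' \<in> {-h..}" using tb[OF r r'] s by auto
      have "\<bar>V (s - \<tau> r r') r' - W (s - \<tau> r r') r'\<bar> \<le> f (max (s - \<tau> r r') 0)"
        using bd[OF _ r'] tb[OF r r'] s by auto
      also have "\<dots> \<le> f s" using mono[of "max (s - \<tau> r r') 0" s] tb[OF r r'] s by auto
      finally show "\<bar>V (s - \<tau> r r') r' - W (s - \<tau> r r') r'\<bar> \<le> f s" .
    qed
    moreover have "F V s r - F W s r = - \<alpha> * (V s r - W s r) + (G V s r - G W s r)"
      by (simp add: F_def algebra_simps)
    moreover have "\<bar>- \<alpha> * (V s r - W s r)\<bar> \<le> \<alpha> * f s"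
      using fs alpha by (simp add: abs_mult)
    ultimately have "\<bar>F V s r - F W s r\<bar> \<le> \<alpha> * f s + L * f s"
      by linarith
    then show "norm (F V s r - F W s r) \<le> c * f s" unfolding c_def by (simp add: distrib_right)
  qed
  also have "\<dots> = c * integral {0..t} f" by (rule integral_mult_right)
  finally show ?thesis by simp
qed

end


lemma eps_zero:
  fixes x C :: real
  assumes C: "C \<ge> 0" and e: "\<And>e. e > 0 \<Longrightarrow> \<bar>x\<bar> \<le> C * e"
  shows "x = 0"
proof (rule ccontr)
  assume "x \<noteq> 0"
  then have p: "\<bar>x\<bar> > 0" by simp
  have "\<bar>x\<bar> \<le> C * (\<bar>x\<bar> / (C + 1))" using e[of "\<bar>x\<bar> / (C + 1)"] p C by simp
  also have "\<dots> < \<bar>x\<bar>" using p C by (simp add: field_simps)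
  finally show False by simp
qed

context dde begin

definition "V0 t r = \<phi> (max (-h) (min t 0)) r"
definition "It n = (P ^^ n) V0"

lemma It_Suc: "It (Suc n) = P (It n)" by (simp add: It_def)
lemma It_0: "It 0 = V0" by (simp add: It_def)

lemma V0cont: "continuous_on ({-h..} \<times> K) (\<lambda>(t,r). V0 t r)"
proof -
  have "continuous_on ({-h..} \<times> K) (\<lambda>x. \<phi> (max (-h) (min (fst x) 0)) (snd x))"
    by (rule Vcomp[OF phic]) (use h0 in \<open>auto intro!: continuous_intros\<close>)
  then show ?thesis by (simp add: V0_def case_prod_beta)
qed

lemma It_cont: "continuous_on ({-h..} \<times> K) (\<lambda>(t,r). It n t r)"
proof (induction n)
  case 0
  then show ?case unfolding It_0 by (rule V0cont)
next
  case (Suc n)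
  then show ?case unfolding It_Suc by (rule Pcont)
qed

lemma It_init: "It n t r = \<phi> t r" if "-h \<le> t" "t \<le> 0"
proof (cases n)
  case 0
  then show ?thesis using that h0 by (simp add: It_0 V0_def)
next
  case (Suc m)
  then show ?thesis using that(2) by (simp only: It_Suc P_init)
qed

lemma phi_bound: obtains M where "M \<ge> 0" "\<And>t r. t \<in> {-h..0} \<Longrightarrow> r \<in> K \<Longrightarrow> \<bar>\<phi> t r\<bar> \<le> M"
proof -
  have cpt: "compact ({-h..0} \<times> K)" using K(1) by (intro compact_Times) auto
  obtain M where M: "\<And>x. x \<in> {-h..0} \<times> K \<Longrightarrow> \<bar>(\<lambda>(t,r). \<phi> t r) x\<bar> \<le> M"
    using cont_bound[OF cpt phic] by blast
  show ?thesis
  proof (rule that[of "max M 0"])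
    fix t r assume "t \<in> {-h..0}" "r \<in> K"
    then show "\<bar>\<phi> t r\<bar> \<le> max M 0" using M[of "(t,r)"] by auto
  qed simp
qed

lemma It_bound:
  obtains B where "B \<ge> 0"
    "\<And>n s r. s \<ge> -h \<Longrightarrow> r \<in> K \<Longrightarrow> \<bar>It (Suc n) s r - It n s r\<bar> \<le> B * c^n * (max s 0)^(Suc n) / fact (Suc n)"
proof -
  obtain Mp where Mp: "Mp \<ge> 0" "\<And>t r. t \<in> {-h..0} \<Longrightarrow> r \<in> K \<Longrightarrow> \<bar>\<phi> t r\<bar> \<le> Mp"
    using phi_bound by blast
  define B where "B = \<alpha> * Mp + MJ * MS * \<mu>"
  have B0: "B \<ge> 0" unfolding B_def using alpha Mp MJ0 MS0 mu0 by simp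
  have base: "\<bar>It (Suc 0) s r - It 0 s r\<bar> \<le> B * max s 0" if s: "s \<ge> -h" and r: "r \<in> K" for s r
  proof (cases "s \<le> 0")
    case True
    then show ?thesis using It_init[OF s True, of "Suc 0"] It_init[OF s True, of 0] B0 by simp
  next
    case False
    have eq: "It (Suc 0) s r - It 0 s r = integral {0..s} (\<lambda>u. F V0 u r)"
      using False h0 by (simp add: It_Suc It_0 P_pos V0_def)
    have "norm (integral {0..s} (\<lambda>u. F V0 u r)) \<le> B * (s - 0)"
    proof (rule Henstock_Kurzweil_Integration.integral_bound)
      show "continuous_on {0..s} (\<lambda>u. F V0 u r)" by (rule Fslice[OF V0cont r])
      fix u assume u: "u \<in> {0..s}"
      have "\<bar>V0 u r\<bar> \<le> Mp" unfolding V0_def using Mp(2)[OF _ r] h0 by auto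
      moreover have "\<bar>G V0 u r\<bar> \<le> MJ * MS * \<mu>"
      proof (rule Gbound[OF _ r V0cont])
        fix r' assume r': "r' \<in> K"
        show "u - \<tau> r r' \<in> {-h..}" using tb[OF r r'] u by auto
      qed
      moreover have "\<bar>- \<alpha> * V0 u r\<bar> = \<alpha> * \<bar>V0 u r\<bar>" using alpha by (simp add: abs_mult)
      moreover have "\<bar>F V0 u r\<bar> \<le> \<bar>- \<alpha> * V0 u r\<bar> + \<bar>G V0 u r\<bar>" unfolding F_def by (rule abs_triangle_ineq)
      moreover have "\<alpha> * \<bar>V0 u r\<bar> \<le> \<alpha> * Mp" using calculation(1) alpha by (intro mult_left_mono) auto
      ultimately show "norm (F V0 u r) \<le> B" unfolding real_norm_def B_def by linarith
    qed (use False in auto)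
    then show ?thesis using False eq by simp
  qed
  have main: "\<forall>s r. s \<ge> -h \<longrightarrow> r \<in> K \<longrightarrow> \<bar>It (Suc n) s r - It n s r\<bar> \<le> B * c^n * (max s 0)^(Suc n) / fact (Suc n)" for n
  proof (induction n)
    case 0
    then show ?case using base by simp
  next
    case (Suc n)
    show ?case
    proof (intro allI impI)
      fix s r assume s: "s \<ge> -h" and r: "r \<in> K"
      show "\<bar>It (Suc (Suc n)) s r - It (Suc n) s r\<bar> \<le> B * c ^ Suc n * max s 0 ^ Suc (Suc n) / fact (Suc (Suc n))"
      proof (cases "s \<le> 0")
        case True
        then show ?thesis using It_init[OF s True, of "Suc (Suc n)"] It_init[OF s True, of "Suc n"] by simp
      next
        case False
        define k where "k = B * c^n / fact (Suc n)"
        have k0: "k \<ge> 0" unfolding k_def using B0 c0 by simp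
        have "\<bar>It (Suc (Suc n)) s r - It (Suc n) s r\<bar> \<le> c * integral {0..s} (\<lambda>u. k * u^(Suc n))"
          unfolding It_Suc[of "Suc n"] It_Suc[of n]
        proof (rule LipStep[OF Pcont[OF It_cont] It_cont _ r])
          show "0 \<le> s" using False by simp
          show "continuous_on {0..s} (\<lambda>u. k * u ^ Suc n)" by (intro continuous_intros)
          fix u v :: real assume "0 \<le> u" "u \<le> v" "v \<le> s"
          then show "k * u ^ Suc n \<le> k * v ^ Suc n" using k0 by (intro mult_left_mono power_mono) auto
        next
          fix s' r' assume "s' \<in> {-h..s}" "r' \<in> K"
          then have "\<bar>It (Suc n) s' r' - It n s' r'\<bar> \<le> B * c ^ n * max s' 0 ^ Suc n / fact (Suc n)"
            using Suc by auto
          moreover have "B * c ^ n * max s' 0 ^ Suc n / fact (Suc n) = k * max s' 0 ^ Suc n"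
            unfolding k_def by simp
          ultimately show "\<bar>P (It n) s' r' - It n s' r'\<bar> \<le> k * max s' 0 ^ Suc n"
            unfolding It_Suc by simp
        qed
        also have "\<dots> = c * k * (s^Suc (Suc n) / Suc (Suc n))"
          using int_pow[of s "Suc n"] False integral_mult_right[of "{0..s}" k "\<lambda>u. u^Suc n"] by simp
        also have "\<dots> = B * c ^ Suc n * max s 0 ^ Suc (Suc n) / fact (Suc (Suc n))"
        proof -
          have m: "max s 0 = s" using False by simp
          have f: "(fact (Suc (Suc n)) :: real) = real (Suc (Suc n)) * fact (Suc n)" by simp
          have fp: "(fact (Suc n) :: real) > 0" by simp
          show ?thesis unfolding m f k_def by (simp add: divide_inverse mult_ac)
        qed
        finally show ?thesis .
      qed
    qed
  qed
  show ?thesis by (rule that[OF B0]) (use main in simp)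
qed

end


context dde begin

lemma Itc: "continuous_on ({-h..} \<times> K) (\<lambda>x. It n (fst x) (snd x))"
  using It_cont[of n] by (simp add: case_prod_beta)

lemma conv:
  obtains V where "continuous_on ({-h..} \<times> K) (\<lambda>(t,r). V t r)"
    "\<And>T e. e > 0 \<Longrightarrow> \<exists>N. \<forall>n\<ge>N. \<forall>s\<in>{-h..T}. \<forall>r\<in>K. \<bar>It n s r - V s r\<bar> < e"
proof -
  obtain B where B: "B \<ge> 0"
    "\<And>n s r. s \<ge> -h \<Longrightarrow> r \<in> K \<Longrightarrow> \<bar>It (Suc n) s r - It n s r\<bar> \<le> B * c^n * (max s 0)^(Suc n) / fact (Suc n)"
    using It_bound by blast
  define D where "D i = (\<lambda>x::real\<times>'a. It (Suc i) (fst x) (snd x) - It i (fst x) (snd x))" for i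
  define Vl where "Vl t r = V0 t r + (\<Sum>i. D i (t, r))" for t r
  have ul: "uniform_limit ({-h..T} \<times> K) (\<lambda>n x. \<Sum>i<n. D i x) (\<lambda>x. \<Sum>i. D i x) sequentially" for T
  proof -
    define Tp where "Tp = max T 0"
    have Tp0: "Tp \<ge> 0" unfolding Tp_def by simp
    define M where "M i = B * c^i * Tp^(Suc i) / fact (Suc i)" for i
    show ?thesis
    proof (rule Weierstrass_m_test)
      fix i x assume x: "x \<in> {-h..T} \<times> K"
      have "\<bar>D i x\<bar> \<le> B * c^i * (max (fst x) 0)^(Suc i) / fact (Suc i)"
        unfolding D_def using B(2)[of "fst x" "snd x" i] x by auto
      also have "\<dots> \<le> M i" unfolding M_def Tp_def using x B(1) c0
        by (intro divide_right_mono mult_left_mono power_mono) auto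
      finally show "norm (D i x) \<le> M i" by simp
    next
      show "summable M"
      proof (rule summable_comparison_test'[OF summable_mult[OF summable_exp[of "c*Tp"], of "B*Tp"]])
        fix i :: nat
        have M0: "B * Tp * (c * Tp) ^ i \<ge> 0" using B(1) Tp0 c0 by simp
        have "M i = (B * Tp * (c * Tp) ^ i) / fact (Suc i)"
          unfolding M_def by (simp add: power_mult_distrib mult_ac)
        also have "\<dots> \<le> (B * Tp * (c * Tp) ^ i) / fact i"
          by (rule divide_left_mono[OF _ M0]) (auto intro: fact_mono)
        also have "\<dots> = B * Tp * (inverse (fact i) * (c * Tp) ^ i)" by (simp add: divide_inverse mult_ac)
        finally show "norm (M i) \<le> B * Tp * (inverse (fact i) * (c * Tp) ^ i)"
          using M0 by (simp add: M_def Tp0 B(1) c0)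
      qed
    qed
  qed
  have Dc: "continuous_on ({-h..} \<times> K) (D i)" for i
    unfolding D_def by (intro continuous_intros Itc)
  have Vlc: "continuous_on ({-h..} \<times> K) (\<lambda>(t,r). Vl t r)"
  proof (rule cont_local)
    fix T
    have "continuous_on ({-h..T} \<times> K) (\<lambda>x. \<Sum>i. D i x)"
    proof (rule uniform_limit_theorem[OF _ ul])
      show "\<forall>\<^sub>F n in sequentially. continuous_on ({-h..T} \<times> K) (\<lambda>x. \<Sum>i<n. D i x)"
        by (intro always_eventually allI continuous_on_sum continuous_on_subset[OF Dc]) auto
    qed simp
    moreover have "continuous_on ({-h..T} \<times> K) (\<lambda>(t,r). V0 t r)"
      by (rule continuous_on_subset[OF V0cont]) auto
    ultimately have "continuous_on ({-h..T} \<times> K) (\<lambda>x. (\<lambda>(t,r). V0 t r) x + (\<Sum>i. D i x))"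
      by (intro continuous_intros)
    then show "continuous_on ({-h..T} \<times> K) (\<lambda>(t,r). Vl t r)"
      by (simp add: Vl_def case_prod_beta)
  qed
  show ?thesis
  proof (rule that[OF Vlc])
    fix T e :: real assume e: "e > 0"
    from uniform_limitD[OF ul[of T] e] obtain N where
      N: "\<And>n. n \<ge> N \<Longrightarrow> \<forall>x\<in>{-h..T} \<times> K. dist (\<Sum>i<n. D i x) (\<Sum>i. D i x) < e"
      unfolding eventually_sequentially by blast
    show "\<exists>N. \<forall>n\<ge>N. \<forall>s\<in>{-h..T}. \<forall>r\<in>K. \<bar>It n s r - Vl s r\<bar> < e"
    proof (intro exI allI impI ballI)
      fix n s r assume n: "N \<le> n" and s: "s \<in> {-h..T}" and r: "r \<in> K"
      have tel: "(\<Sum>i<n. D i (s, r)) = It n s r - It 0 s r"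
        unfolding D_def using sum_lessThan_telescope[of "\<lambda>i. It i s r" n] by simp
      have "dist (\<Sum>i<n. D i (s, r)) (\<Sum>i. D i (s, r)) < e" using N[OF n] s r by auto
      then show "\<bar>It n s r - Vl s r\<bar> < e"
        unfolding Vl_def dist_real_def tel It_0 by simp
    qed
  qed
qed

lemma Vfix:
  assumes Vc: "continuous_on ({-h..} \<times> K) (\<lambda>(t,r). V t r)"
    and U: "\<And>T e. e > 0 \<Longrightarrow> \<exists>N. \<forall>n\<ge>N. \<forall>s\<in>{-h..T}. \<forall>r\<in>K. \<bar>It n s r - V s r\<bar> < e"
    and t: "t \<ge> -h" and r: "r \<in> K"
  shows "V t r = P V t r"
proof (cases "t \<le> 0")
  case True
  have "V t r - \<phi> t r = 0"
  proof (rule eps_zero[of 1])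
    fix e :: real assume e: "e > 0"
    obtain N where N: "\<forall>n\<ge>N. \<forall>s\<in>{-h..t}. \<forall>r\<in>K. \<bar>It n s r - V s r\<bar> < e" using U[OF e] by blast
    then have "\<bar>It N t r - V t r\<bar> < e" using t r by auto
    then show "\<bar>V t r - \<phi> t r\<bar> \<le> 1 * e" using It_init[OF t True, of N r] by simp
  qed simp
  then show ?thesis using P_init[OF True] by simp
next
  case False
  then have t0: "t \<ge> 0" by simp
  have "P V t r - V t r = 0"
  proof (rule eps_zero[of "c * t + 1"])
    show "c * t + 1 \<ge> 0" using c0 t0 by simp
    fix e :: real assume e: "e > 0"
    obtain N where N: "\<forall>n\<ge>N. \<forall>s\<in>{-h..t}. \<forall>r\<in>K. \<bar>It n s r - V s r\<bar> < e" using U[OF e] by blast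
    have "\<bar>P V t r - P (It N) t r\<bar> \<le> c * integral {0..t} (\<lambda>_. e)"
    proof (rule LipStep[OF Vc It_cont t0 r])
      fix s r' assume "s \<in> {-h..t}" "r' \<in> K"
      then show "\<bar>V s r' - It N s r'\<bar> \<le> e" using N by (fastforce simp: abs_minus_commute)
    qed auto
    also have "\<dots> = c * t * e" using t0 by simp
    finally have a: "\<bar>P V t r - P (It N) t r\<bar> \<le> c * t * e" .
    have "\<bar>It (Suc N) t r - V t r\<bar> < e" using N t r by auto
    then have "\<bar>P (It N) t r - V t r\<bar> < e" by (simp add: It_Suc)
    with a show "\<bar>P V t r - V t r\<bar> \<le> (c * t + 1) * e" by (simp add: distrib_right)
  qed
  then show ?thesis by simp
qed

lemma fix_unique:
  assumes Vc: "continuous_on ({-h..} \<times> K) (\<lambda>(t,r). V t r)"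
    and Wc: "continuous_on ({-h..} \<times> K) (\<lambda>(t,r). W t r)"
    and Vf: "\<And>t r. t \<ge> -h \<Longrightarrow> r \<in> K \<Longrightarrow> V t r = P V t r"
    and Wf: "\<And>t r. t \<ge> -h \<Longrightarrow> r \<in> K \<Longrightarrow> W t r = P W t r"
    and t0: "t0 \<ge> -h" and r0: "r0 \<in> K"
  shows "V t0 r0 = W t0 r0"
proof -
  define T where "T = max t0 0"
  have cpt: "compact ({-h..T} \<times> K)" using K(1) by (intro compact_Times) auto
  have cnt: "continuous_on ({-h..T} \<times> K) (\<lambda>x. V (fst x) (snd x) - W (fst x) (snd x))"
  proof -
    have sub: "{-h..T} \<times> K \<subseteq> {-h..} \<times> K" by auto
    show ?thesis
      using continuous_on_subset[OF Vc sub] continuous_on_subset[OF Wc sub]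
      by (simp add: case_prod_beta continuous_on_diff)
  qed
  obtain E0 where E0: "\<And>x. x \<in> {-h..T} \<times> K \<Longrightarrow> \<bar>V (fst x) (snd x) - W (fst x) (snd x)\<bar> \<le> E0"
    using cont_bound[OF cpt cnt] by blast
  define E where "E = max E0 0"
  have E: "E \<ge> 0" "\<And>s r. s \<in> {-h..T} \<Longrightarrow> r \<in> K \<Longrightarrow> \<bar>V s r - W s r\<bar> \<le> E"
    unfolding E_def using E0 by fastforce+
  have main: "\<forall>s\<in>{-h..T}. \<forall>r\<in>K. \<bar>V s r - W s r\<bar> \<le> E * c^n * (max s 0)^n / fact n" for n
  proof (induction n)
    case 0
    then show ?case using E by simp
  next
    case (Suc n)
    show ?case
    proof (intro ballI)
      fix s r assume s: "s \<in> {-h..T}" and r: "r \<in> K"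
      show "\<bar>V s r - W s r\<bar> \<le> E * c ^ Suc n * max s 0 ^ Suc n / fact (Suc n)"
      proof (cases "s \<le> 0")
        case True
        have "V s r = W s r" using Vf[of s r] Wf[of s r] s r P_init[OF True] by simp
        then show ?thesis using True by simp
      next
        case False
        define k where "k = E * c^n / fact n"
        have k0: "k \<ge> 0" unfolding k_def using E c0 by simp
        have "\<bar>V s r - W s r\<bar> = \<bar>P V s r - P W s r\<bar>" using Vf[of s r] Wf[of s r] s r by simp
        also have "\<dots> \<le> c * integral {0..s} (\<lambda>u. k * u^n)"
        proof (rule LipStep[OF Vc Wc _ r])
          show "0 \<le> s" using False by simp
          show "continuous_on {0..s} (\<lambda>u. k * u ^ n)" by (intro continuous_intros)
          fix u v :: real assume "0 \<le> u" "u \<le> v" "v \<le> s"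
          then show "k * u ^ n \<le> k * v ^ n" using k0 by (intro mult_left_mono power_mono) auto
        next
          fix s' r' assume s': "s' \<in> {-h..s}" and r': "r' \<in> K"
          then have "s' \<in> {-h..T}" using s by auto
          then have "\<bar>V s' r' - W s' r'\<bar> \<le> E * c ^ n * max s' 0 ^ n / fact n"
            using Suc r' by auto
          moreover have "E * c ^ n * max s' 0 ^ n / fact n = k * max s' 0 ^ n"
            unfolding k_def by simp
          ultimately show "\<bar>V s' r' - W s' r'\<bar> \<le> k * max s' 0 ^ n" by simp
        qed
        also have "\<dots> = c * k * (s^Suc n / Suc n)"
          using int_pow[of s n] False integral_mult_right[of "{0..s}" k "\<lambda>u. u^n"] by simp
        also have "\<dots> = E * c ^ Suc n * max s 0 ^ Suc n / fact (Suc n)"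
        proof -
          have m: "max s 0 = s" using False by simp
          have f: "(fact (Suc n) :: real) = real (Suc n) * fact n" by simp
          show ?thesis unfolding m f k_def by (simp add: divide_inverse mult_ac)
        qed
        finally show ?thesis .
      qed
    qed
  qed
  define x where "x = max t0 0"
  have "(\<lambda>n. inverse (fact n) * (c * x) ^ n) \<longlonglongrightarrow> 0"
    by (rule summable_LIMSEQ_zero[OF summable_exp])
  then have lim: "(\<lambda>n. E * (inverse (fact n) * (c * x) ^ n)) \<longlonglongrightarrow> 0"
    by (rule tendsto_mult_right_zero)
  have "\<bar>V t0 r0 - W t0 r0\<bar> \<le> 0"
  proof (rule LIMSEQ_le_const[OF lim], intro exI allI impI)
    fix n :: nat
    have "t0 \<in> {-h..T}" using t0 unfolding T_def by auto
    then have "\<bar>V t0 r0 - W t0 r0\<bar> \<le> E * c ^ n * x ^ n / fact n" using main[of n] r0 unfolding x_def by auto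
    also have "\<dots> = E * (inverse (fact n) * (c * x) ^ n)" by (simp add: divide_inverse power_mult_distrib mult_ac)
    finally show "\<bar>V t0 r0 - W t0 r0\<bar> \<le> E * (inverse (fact n) * (c * x) ^ n)" .
  qed
  then show ?thesis by simp
qed

end


lemma avg_bound:
  fixes f :: "real \<Rightarrow> real"
  assumes ab: "a < b" and f: "continuous_on {a..b} f" and e: "\<And>u. u \<in> {a..b} \<Longrightarrow> \<bar>f u - y\<bar> \<le> e"
  shows "\<bar>integral {a..b} f / (b - a) - y\<bar> \<le> e"
proof -
  have i: "f integrable_on {a..b}" by (rule integrable_continuous_interval[OF f])
  have "integral {a..b} f - (b - a) * y = integral {a..b} (\<lambda>u. f u - y)"
    using integral_diff[OF i integrable_const_ivl[of y a b]] ab by simp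
  also have "norm \<dots> \<le> e * (b - a)"
    by (rule Henstock_Kurzweil_Integration.integral_bound) (use ab e in \<open>auto intro!: continuous_intros f\<close>)
  finally have "\<bar>integral {a..b} f - (b - a) * y\<bar> \<le> e * (b - a)" by simp
  moreover have "integral {a..b} f / (b - a) - y = (integral {a..b} f - (b - a) * y) / (b - a)"
    using ab by (simp add: field_simps)
  ultimately show ?thesis using ab by (simp add: abs_div pos_divide_le_eq)
qed

lemma quot_bound:
  fixes f :: "real \<Rightarrow> real"
  assumes f: "continuous_on {0..b} f" and st: "0 \<le> s" "s \<le> b" "0 \<le> t" "t \<le> b" "s \<noteq> t"
    and e: "\<And>u. u \<in> {min s t..max s t} \<Longrightarrow> \<bar>f u - f t\<bar> \<le> e"
  shows "\<bar>(integral {0..s} f - integral {0..t} f) / (s - t) - f t\<bar> \<le> e"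
proof (cases "t < s")
  case True
  have "f integrable_on {0..s}"
    by (rule integrable_continuous_interval, rule continuous_on_subset[OF f]) (use st in auto)
  from Henstock_Kurzweil_Integration.integral_combine[OF st(3) less_imp_le[OF True] this]
  have eq: "integral {0..s} f - integral {0..t} f = integral {t..s} f" by simp
  show ?thesis unfolding eq
    by (rule avg_bound[OF True]) (use st e True in \<open>auto intro: continuous_on_subset[OF f]\<close>)
next
  case False
  then have ts: "s < t" using st by simp
  have "f integrable_on {0..t}"
    by (rule integrable_continuous_interval, rule continuous_on_subset[OF f]) (use st in auto)
  from Henstock_Kurzweil_Integration.integral_combine[OF st(1) less_imp_le[OF ts] this]
  have d: "integral {0..s} f - integral {0..t} f = - integral {s..t} f" by linarith
  have eq: "(integral {0..s} f - integral {0..t} f) / (s - t) = integral {s..t} f / (t - s)"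
    unfolding d by (metis divide_minus_right minus_diff_eq minus_divide_left)
  show ?thesis unfolding eq
    by (rule avg_bound[OF ts]) (use st e ts in \<open>auto intro: continuous_on_subset[OF f]\<close>)
qed

context dde begin

lemma sol_fix:
  assumes sol: "global_solution K \<alpha> J S \<tau> h \<phi> W"
  shows "continuous_on ({-h..} \<times> K) (\<lambda>(t,r). W t r)"
    and "\<And>t r. t \<ge> -h \<Longrightarrow> r \<in> K \<Longrightarrow> W t r = P W t r"
proof -
  have Wy: "ycont_on {-h..} K W" using sol unfolding global_solution_def by blast
  obtain V' where V'y: "ycont_on {0..} K V'" and der: "\<And>t. t \<ge> 0 \<Longrightarrow> yhas_deriv K W (V' t) t {0..}"
    and eq: "\<And>t r. t \<ge> 0 \<Longrightarrow> r \<in> K \<Longrightarrow> V' t r = - \<alpha> * W t r + Gdelay K J S \<tau> W t r"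
    using sol unfolding global_solution_def by blast
  have init: "\<And>t r. t \<in> {-h..0} \<Longrightarrow> r \<in> K \<Longrightarrow> W t r = \<phi> t r"
    using sol unfolding global_solution_def by blast
  show Wc: "continuous_on ({-h..} \<times> K) (\<lambda>(t,r). W t r)" by (rule joint_from_ycont[OF K(1) Wy])
  have Wk: "continuous_on K (W s)" if "s \<ge> -h" for s using Wy that unfolding ycont_on_def by auto
  have V'k: "continuous_on K (V' s)" if "s \<ge> 0" for s using V'y that unfolding ycont_on_def by auto
  have pd: "((\<lambda>s. W s r) has_real_derivative V' t r) (at t within {0..})" if t: "t \<ge> 0" and r: "r \<in> K" for t r
  proof -
    have sup0: "((\<lambda>s. supn K (\<lambda>x. (W s x - W t x) / (s - t) - V' t x)) \<longlongrightarrow> 0) (at t within {0..})"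
      using der[OF t] unfolding yhas_deriv_def .
    have ev: "\<forall>\<^sub>F s in at t within {0..}. norm ((W s r - W t r) / (s - t) - V' t r) \<le> supn K (\<lambda>x. (W s x - W t x) / (s - t) - V' t x)"
      unfolding eventually_at
    proof (intro exI[of _ 1] conjI ballI impI)
      fix s :: real assume s: "s \<in> {0..}" "s \<noteq> t \<and> dist s t < 1"
      have "continuous_on K (\<lambda>x. (W s x - W t x) / (s - t) - V' t x)"
        using Wk[of s] Wk[of t] V'k[OF t] s t h0 by (intro continuous_intros) auto
      from supn_ge[OF K(1) this r]
      show "norm ((W s r - W t r) / (s - t) - V' t r) \<le> supn K (\<lambda>x. (W s x - W t x) / (s - t) - V' t x)"
        by simp
    qed simp
    have "((\<lambda>s. (W s r - W t r) / (s - t) - V' t r) \<longlongrightarrow> 0) (at t within {0..})"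
      by (rule Lim_null_comparison[OF ev sup0])
    then have "((\<lambda>s. ((W s r - W t r) / (s - t) - V' t r) + V' t r) \<longlongrightarrow> 0 + V' t r) (at t within {0..})"
      by (intro tendsto_add tendsto_const)
    then show ?thesis unfolding has_field_derivative_iff by simp
  qed
  fix t r assume t: "t \<ge> -h" and r: "r \<in> K"
  show "W t r = P W t r"
  proof (cases "t \<le> 0")
    case True
    then show ?thesis using init[of t r] t r P_init[OF True] by simp
  next
    case False
    then have t0: "0 \<le> t" by simp
    have "((\<lambda>s. V' s r) has_integral (W t r - W 0 r)) {0..t}"
    proof (rule fundamental_theorem_of_calculus[OF t0])
      fix s assume s: "s \<in> {0..t}"
      have "((\<lambda>s. W s r) has_real_derivative V' s r) (at s within {0..t})"
        by (rule DERIV_subset[OF pd]) (use s r in auto)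
      then show "((\<lambda>s. W s r) has_vector_derivative V' s r) (at s within {0..t})"
        by (simp add: has_real_derivative_iff_has_vector_derivative)
    qed
    then have "W t r = W 0 r + integral {0..t} (\<lambda>s. V' s r)" by (simp add: integral_unique)
    also have "integral {0..t} (\<lambda>s. V' s r) = integral {0..t} (\<lambda>s. F W s r)"
      by (rule integral_cong) (use eq r in \<open>auto simp: F_def G_def\<close>)
    also have "W 0 r = \<phi> 0 r" using init[of 0 r] r h0 by simp
    finally show ?thesis using P_pos[OF t0] by simp
  qed
qed

theorem exists_unique:
  "\<exists>V. global_solution K \<alpha> J S \<tau> h \<phi> V \<and>
       (\<forall>W. global_solution K \<alpha> J S \<tau> h \<phi> W \<longrightarrow> (\<forall>t\<ge>-h. \<forall>r\<in>K. W t r = V t r))"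
proof -
  obtain V where Vc: "continuous_on ({-h..} \<times> K) (\<lambda>(t,r). V t r)"
    and U: "\<And>T e. e > 0 \<Longrightarrow> \<exists>N. \<forall>n\<ge>N. \<forall>s\<in>{-h..T}. \<forall>r\<in>K. \<bar>It n s r - V s r\<bar> < e"
    using conv by blast
  have Vf: "\<And>t r. t \<ge> -h \<Longrightarrow> r \<in> K \<Longrightarrow> V t r = P V t r" by (rule Vfix[OF Vc U])
  have FVc: "continuous_on ({0..} \<times> K) (\<lambda>(s,r). F V s r)" by (rule Fcont[OF Vc])
  have deriv: "yhas_deriv K V (F V t) t {0..}" if t: "t \<ge> 0" for t
    unfolding yhas_deriv_def
  proof (rule tendstoI)
    fix e :: real assume e: "e > 0"
    obtain X0 where X0: "t \<in> X0" "open X0"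
      "\<forall>u\<in>X0 \<inter> {0..}. \<forall>x\<in>K. dist ((\<lambda>(s,r). F V s r) (u,x)) ((\<lambda>(s,r). F V s r) (t,x)) \<le> e/2"
      using continuous_on_prod_compactE[OF FVc K(1), of t "e/2"] e t by auto
    obtain d where d: "d > 0" "ball t d \<subseteq> X0" using X0 open_contains_ball by blast
    show "\<forall>\<^sub>F s in at t within {0..}. dist (supn K (\<lambda>x. (V s x - V t x) / (s - t) - F V t x)) 0 < e"
      unfolding eventually_at
    proof (intro exI[of _ d] conjI ballI impI)
      fix s :: real assume s: "s \<in> {0..}" "s \<noteq> t \<and> dist s t < d"
      have "\<bar>supn K (\<lambda>x. (V s x - V t x) / (s - t) - F V t x)\<bar> \<le> e/2"
      proof (rule supn_abs_le[OF K(2)])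
        fix x assume x: "x \<in> K"
        have "V s x - V t x = integral {0..s} (\<lambda>u. F V u x) - integral {0..t} (\<lambda>u. F V u x)"
          using Vf[of s x] Vf[of t x] s t x h0 P_pos[of s] P_pos[of t] by simp
        moreover have "\<bar>(integral {0..s} (\<lambda>u. F V u x) - integral {0..t} (\<lambda>u. F V u x)) / (s - t) - F V t x\<bar> \<le> e/2"
        proof (rule quot_bound[where b="max s t"])
          show "continuous_on {0..max s t} (\<lambda>u. F V u x)" by (rule Fslice[OF Vc x])
          fix u assume u: "u \<in> {min s t..max s t}"
          then have "dist t u < d" using s by (auto simp: dist_real_def)
          then have "u \<in> X0" using d by auto
          moreover have "u \<ge> 0" using u s t by auto
          ultimately show "\<bar>F V u x - F V t x\<bar> \<le> e/2" using X0(3) x by (auto simp: dist_real_def)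
        qed (use s t in auto)
        ultimately show "\<bar>(V s x - V t x) / (s - t) - F V t x\<bar> \<le> e/2" by simp
      qed
      then show "dist (supn K (\<lambda>x. (V s x - V t x) / (s - t) - F V t x)) 0 < e"
        using e by simp
    qed (use d in auto)
  qed
  have sol: "global_solution K \<alpha> J S \<tau> h \<phi> V"
    unfolding global_solution_def
  proof (intro conjI exI[of _ "F V"] allI impI ballI)
    show "ycont_on {-h..} K V" by (rule ycont_from_joint[OF K Vc])
    show "ycont_on {0..} K (F V)" by (rule ycont_from_joint[OF K FVc])
    fix t :: real
    show "0 \<le> t \<Longrightarrow> yhas_deriv K V (F V t) t {0..}" by (rule deriv)
    fix r assume "0 \<le> t" "r \<in> K"
    then show "F V t r = - \<alpha> * V t r + Gdelay K J S \<tau> V t r" by (simp add: F_def G_def)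
  next
    fix t r assume t: "t \<in> {-h..0}" and r: "r \<in> K"
    then show "V t r = \<phi> t r" using Vf[of t r] P_init[of t V r] by auto
  qed
  show ?thesis
  proof (intro exI conjI allI impI ballI)
    show "global_solution K \<alpha> J S \<tau> h \<phi> V" by (rule sol)
    fix W t r assume W: "global_solution K \<alpha> J S \<tau> h \<phi> W" and t: "-h \<le> t" and r: "r \<in> K"
    show "W t r = V t r" by (rule fix_unique[OF sol_fix(1)[OF W] Vc sol_fix(2)[OF W] Vf t r])
  qed
qed

end


lemma S_lip:
  fixes S :: "real \<Rightarrow> real"
  assumes d: "\<And>x. S differentiable (at x)" and b: "\<And>x. \<bar>deriv S x\<bar> \<le> L"
  shows "\<bar>S x - S y\<bar> \<le> L * \<bar>x - y\<bar>"
proof -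
  have D: "\<And>z. DERIV S z :> deriv S z" using d DERIV_deriv_iff_real_differentiable by blast
  have aux: "\<bar>S b - S a\<bar> \<le> L * \<bar>b - a\<bar>" if ab: "a < b" for a b
  proof -
    obtain z where "S b - S a = (b - a) * deriv S z" using MVT2[OF ab D] by blast
    then have "\<bar>S b - S a\<bar> = \<bar>b - a\<bar> * \<bar>deriv S z\<bar>" by (simp add: abs_mult)
    also have "\<dots> \<le> \<bar>b - a\<bar> * L" by (rule mult_left_mono[OF b]) simp
    finally show ?thesis by (simp add: mult.commute)
  qed
  consider "x < y" | "x = y" | "y < x" by linarith
  then show ?thesis
  proof cases
    case 1 then show ?thesis using aux[OF 1] by (simp add: abs_minus_commute)
  next
    case 2 then show ?thesis using b[of x] by simp
  next
    case 3 then show ?thesis using aux[OF 3] by simp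
  qed
qed

theorem corollary2p7:
  fixes \<Omega> :: "'a::euclidean_space set"
    and J \<tau> :: "'a \<Rightarrow> 'a \<Rightarrow> real" and S :: "real \<Rightarrow> real" and \<alpha> h :: real
    and \<phi> :: "real \<Rightarrow> 'a \<Rightarrow> real"
  assumes "\<Omega> \<noteq> {}" "bounded \<Omega>" "connected \<Omega>" "open \<Omega>"
    and "continuous_on (closure \<Omega> \<times> closure \<Omega>) (\<lambda>(r, r'). J r r')"
    and "\<And>k x. (deriv ^^ k) S differentiable (at x)"
    and "\<And>k. bounded (range ((deriv ^^ k) S))"
    and "continuous_on (closure \<Omega> \<times> closure \<Omega>) (\<lambda>(r, r'). \<tau> r r')"
    and "\<And>r r'. r \<in> closure \<Omega> \<Longrightarrow> r' \<in> closure \<Omega> \<Longrightarrow> \<tau> r r' \<ge> 0"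
    and "\<exists>r\<in>closure \<Omega>. \<exists>r'\<in>closure \<Omega>. \<tau> r r' \<noteq> 0"
    and "\<alpha> > 0"
    and "h = (SUP p\<in>closure \<Omega> \<times> closure \<Omega>. \<tau> (fst p) (snd p))"
    and "ycont_on {-h..0} (closure \<Omega>) \<phi>"
  shows "\<exists>V. global_solution (closure \<Omega>) \<alpha> J S \<tau> h \<phi> V \<and>
           (\<forall>W. global_solution (closure \<Omega>) \<alpha> J S \<tau> h \<phi> W \<longrightarrow>
                (\<forall>t\<ge>-h. \<forall>r\<in>closure \<Omega>. W t r = V t r))"
proof -
  define Kc0 where "Kc0 = closure \<Omega>"
  have Kc: "compact Kc0" unfolding Kc0_def using assms(2) by simp
  have Kne: "Kc0 \<noteq> {}" unfolding Kc0_def using assms(1) by simp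
  have KK: "compact (Kc0 \<times> Kc0)" by (rule compact_Times[OF Kc Kc])
  obtain MJ where MJ: "\<And>x. x \<in> Kc0 \<times> Kc0 \<Longrightarrow> \<bar>(\<lambda>(r, r'). J r r') x\<bar> \<le> MJ"
    using cont_bound[OF KK assms(5)[folded Kc0_def]] by blast
  have dS: "\<And>x. S differentiable (at x)" using assms(6)[of 0] by simp
  have Sc: "continuous_on UNIV S"
    by (rule continuous_at_imp_continuous_on) (use dS differentiable_imp_continuous_within in blast)
  obtain MS where MS: "\<And>x. \<bar>S x\<bar> \<le> MS"
    using assms(7)[of 0] unfolding bounded_iff by auto
  obtain L0 where L0: "\<And>x. \<bar>deriv S x\<bar> \<le> L0"
    using assms(7)[of 1] unfolding bounded_iff by auto
  define LS where "LS = max L0 0"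
  have Sl: "\<And>x y. \<bar>S x - S y\<bar> \<le> LS * \<bar>x - y\<bar>"
  proof (rule S_lip[OF dS])
    fix x show "\<bar>deriv S x\<bar> \<le> LS" using L0[of x] unfolding LS_def by linarith
  qed
  have tcont: "continuous_on (Kc0 \<times> Kc0) (\<lambda>p. \<tau> (fst p) (snd p))"
    using assms(8)[folded Kc0_def] by (simp add: case_prod_beta)
  have bdd: "bdd_above ((\<lambda>p. \<tau> (fst p) (snd p)) ` (Kc0 \<times> Kc0))"
    by (rule bounded_imp_bdd_above[OF compact_imp_bounded[OF compact_continuous_image[OF tcont KK]]])
  have tb: "\<And>r r'. r \<in> Kc0 \<Longrightarrow> r' \<in> Kc0 \<Longrightarrow> 0 \<le> \<tau> r r' \<and> \<tau> r r' \<le> h"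
  proof
    fix r r' assume rr: "r \<in> Kc0" "r' \<in> Kc0"
    show "0 \<le> \<tau> r r'" using assms(9) rr unfolding Kc0_def by blast
    have "(\<lambda>p. \<tau> (fst p) (snd p)) (r, r') \<le> (SUP p\<in>Kc0 \<times> Kc0. \<tau> (fst p) (snd p))"
      by (rule cSUP_upper[OF _ bdd]) (use rr in auto)
    then show "\<tau> r r' \<le> h" using assms(12) unfolding Kc0_def by simp
  qed
  obtain r0 where r0: "r0 \<in> Kc0" using Kne by blast
  have h0: "h \<ge> 0" using tb[OF r0 r0] by linarith
  have phic: "continuous_on ({-h..0} \<times> Kc0) (\<lambda>(t,r). \<phi> t r)"
    by (rule joint_from_ycont[OF Kc assms(13)[folded Kc0_def]])
  interpret dde Kc0 J \<tau> S \<alpha> h MJ MS LS \<phi>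
  proof
    show "\<And>r r'. r \<in> Kc0 \<Longrightarrow> r' \<in> Kc0 \<Longrightarrow> \<bar>J r r'\<bar> \<le> MJ" using MJ by force
  qed (use Kc Kne assms(5,8,11) Sc MS Sl tb h0 phic in \<open>auto simp: Kc0_def LS_def\<close>)
  show ?thesis using exists_unique unfolding Kc0_def .
qed


end
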